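(* There exists a constant $c_0>0$ such that for all $n,r,t\in\mathbb{N}$ and $\varepsilon\in(0,1)$ with $r<\frac{\varepsilon^2 n}{c_0 t}$, there is a 1-sided error, nonadaptive, $t$-online-erasure-resilient $\varepsilon$-tester for sortedness of $n$-element real sequences $f:[n]\to\mathbb{R}$ with at most $r$ distinct values, which makes $O(\sqrt r/\varepsilon)$ queries, each chosen uniformly and independently from $[n]$.
   Context: Online-erasure model. An input is a function $f:D\to R$ on a finite domain $D$. An algorithm accesses $f$ only through an oracle $\mathcal{O}$ by querying points $x\in D$ one at a time and receiving $\mathcal{O}(x)$. Initially $\mathcal{O}(x)=f(x)$ for all $x\in D$. For $t\in\mathbb{N}$, a $t$-online-erasure oracle, after answering each query, may choose up to $t$ points $x\in D$ and set $\mathcal{O}(x)=\perp$ (a special "erased" symbol); these values are used to answer all future queries. The choice of erasures (the adversarial strategy) may depend on $f$, on the queries and answers so far, and on the algorithm's code, but not on the algorithm's future random coins; the algorithm does not know where erasures are. A property $\mathcal{P}$ is a set of functions; $f$ is $\varepsilon$-far from $\mathcal{P}$ if for every $g\in\mathcal{P}$, $f$ and $g$ differ on at least an $\varepsilon$ fraction of $D$. A $t$-online-erasure-resilient $\varepsilon$-tester for $\mathcal{P}$ is a randomized algorithm that, given $t,\varepsilon$ and access to $f$ via a $t$-online-erasure oracle, for every adversarial strategy accepts with probability at least $2/3$ if $f\in\mathcal{P}$ and rejects with probability at least $2/3$ if $f$ is $\varepsilon$-far from $\mathcal{P}$. It has 1-sided error if it accepts every $f\in\mathcal{P}$ with probability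 1; it is nonadaptive if its queries do not depend on answers to previous queries. A sequence $f:[n]\to\mathbb{R}$ is sorted if $f(x)\le f(y)$ for all $x<y$; here the tester is promised that $f$ takes at most $r$ distinct values, and "$\varepsilon$-far" is with respect to the set of sorted sequences. *)

theory Defs
  imports "HOL-Probability.Probability"
begin

text \<open>Sequences f : [n] -> R are modelled as functions nat => real; only the
values on {1..n} matter.\<close>

definition sorted_seq :: "nat \<Rightarrow> (nat \<Rightarrow> real) \<Rightarrow> bool" where
  "sorted_seq n f \<longleftrightarrow> (\<forall>x\<in>{1..n}. \<forall>y\<in>{1..n}. x < y \<longrightarrow> f x \<le> f y)"

definition seq_dist :: "nat \<Rightarrow> (nat \<Rightarrow> real) \<Rightarrow> (nat \<Rightarrow> real) \<Rightarrow> real" where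
  "seq_dist n f g = real (card {x\<in>{1..n}. f x \<noteq> g x}) / real n"

definition far_from_sorted :: "nat \<Rightarrow> real \<Rightarrow> (nat \<Rightarrow> real) \<Rightarrow> bool" where
  "far_from_sorted n \<epsilon> f \<longleftrightarrow> (\<forall>g. sorted_seq n g \<longrightarrow> seq_dist n f g \<ge> \<epsilon>)"

text \<open>A (deterministic) adversarial strategy: after answering the query whose
history of queries so far is h (h includes the current query), it erases the
set of points adv h. Answers are determined by f, the queries and past erasures,
so depending on the query history (and implicitly on f and the algorithm,
which are fixed before the adversary is chosen) is fully general.\<close>

type_synonym adversary = "nat list \<Rightarrow> nat set"

definition valid_adversary :: "nat \<Rightarrow> adversary \<Rightarrow> bool" where
  "valid_adversary t adv \<longleftrightarrow> (\<forall>h. finite (adv h) \<and> card (adv h) \<le> t)"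

text \<open>Points erased before the i-th query (0-based): the union of the erasures
made after queries 0, ..., i-1.\<close>

definition erased_before :: "adversary \<Rightarrow> nat list \<Rightarrow> nat \<Rightarrow> nat set" where
  "erased_before adv qs i = (\<Union>j<i. adv (take (Suc j) qs))"

text \<open>Oracle answers; None stands for the erased symbol.\<close>

definition oracle_answers :: "(nat \<Rightarrow> real) \<Rightarrow> adversary \<Rightarrow> nat list \<Rightarrow> real option list" where
  "oracle_answers f adv qs =
     map (\<lambda>i. if qs ! i \<in> erased_before adv qs i then None else Some (f (qs ! i)))
         [0..<length qs]"

fun uniform_queries :: "nat \<Rightarrow> nat \<Rightarrow> nat list pmf" where
  "uniform_queries n 0 = return_pmf []"
| "uniform_queries n (Suc k) =
     bind_pmf (pmf_of_set {1..n}) (\<lambda>x. map_pmf (\<lambda>xs. x # xs) (uniform_queries n k))"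

text \<open>A nonadaptive tester with uniform queries: it makes k uniform independent
queries and then decides (possibly randomly; True = accept) from the queries
and answers via dec.\<close>

definition accept_prob ::
  "nat \<Rightarrow> nat \<Rightarrow> (nat list \<Rightarrow> real option list \<Rightarrow> bool pmf) \<Rightarrow> (nat \<Rightarrow> real) \<Rightarrow> adversary \<Rightarrow> real" where
  "accept_prob n k dec f adv =
     measure_pmf.prob (bind_pmf (uniform_queries n k) (\<lambda>qs. dec qs (oracle_answers f adv qs))) {True}"

definition oe_sortedness_tester ::
  "nat \<Rightarrow> nat \<Rightarrow> nat \<Rightarrow> real \<Rightarrow> nat \<Rightarrow> (nat list \<Rightarrow> real option list \<Rightarrow> bool pmf) \<Rightarrow> bool" where
  "oe_sortedness_tester n r t \<epsilon> k dec \<longleftrightarrow>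
     (\<forall>f adv. card (f ` {1..n}) \<le> r \<longrightarrow> valid_adversary t adv \<longrightarrow>
        (sorted_seq n f \<longrightarrow> accept_prob n k dec f adv = 1) \<and>
        (far_from_sorted n \<epsilon> f \<longrightarrow> 1 - accept_prob n k dec f adv \<ge> 2/3))"

end

theory Submission
  imports Defs
begin


fun EU :: "nat \<Rightarrow> nat \<Rightarrow> (nat list \<Rightarrow> real) \<Rightarrow> real" where
  "EU n 0 g = g []"
| "EU n (Suc k) g = (\<Sum>x\<in>{1..n}. EU n k (\<lambda>q. g (x # q))) / real n"

lemma set_pmf_uq: "n \<ge> 1 \<Longrightarrow> set_pmf (uniform_queries n k) \<subseteq> {q. set q \<subseteq> {1..n} \<and> length q = k}"
  by (induction k) force+

lemma finite_uq: "n \<ge> 1 \<Longrightarrow> finite (set_pmf (uniform_queries n k))"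
  by (rule finite_subset[OF set_pmf_uq]) (auto intro: finite_lists_length_eq)

lemma exp_EU: "n \<ge> 1 \<Longrightarrow> measure_pmf.expectation (uniform_queries n k) g = EU n k g"
proof (induction k arbitrary: g)
  case 0 then show ?case by simp
next
  case (Suc k)
  have "measure_pmf.expectation (uniform_queries n (Suc k)) g =
    (\<Sum>a\<in>{1..n}. measure_pmf.expectation (map_pmf ((#) a) (uniform_queries n k)) g / real (card {1..n}))"
    using Suc.prems by (simp only: uniform_queries.simps, subst pmf_expectation_bind_pmf_of_set)
      (auto simp: finite_uq divide_inverse mult.commute)
  also have "\<dots> = (\<Sum>a\<in>{1..n}. EU n k (\<lambda>q. g (a # q)) / real n)"
    using Suc.IH[OF Suc.prems] by (simp add: divide_inverse mult.commute)
  finally show ?case by (simp add: sum_divide_distrib)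
qed

lemma EU_add: "EU n k (\<lambda>q. g q + h q) = EU n k g + EU n k h"
  by (induction k arbitrary: g h) (simp_all add: sum.distrib add_divide_distrib)

lemma EU_cmult: "EU n k (\<lambda>q. c * g q) = c * EU n k g"
  by (induction k arbitrary: g) (simp_all add: sum_distrib_left)

lemma EU_diff: "EU n k (\<lambda>q. g q - h q) = EU n k g - EU n k h"
  using EU_add[of n k g "\<lambda>q. - h q"] EU_cmult[of n k "-1" h] by simp

lemma EU_sum: "EU n k (\<lambda>q. \<Sum>i\<in>I. g i q) = (\<Sum>i\<in>I. EU n k (g i))"
proof (induction k arbitrary: g)
  case 0 then show ?case by simp
next
  case (Suc k)
  have "(\<Sum>x\<in>{1..n}. \<Sum>i\<in>I. EU n k (\<lambda>q. g i (x#q))) = (\<Sum>i\<in>I. \<Sum>x\<in>{1..n}. EU n k (\<lambda>q. g i (x#q)))" by (rule sum.swap)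
  then show ?case using Suc.IH by (simp add: sum_divide_distrib[symmetric])
qed

lemma EU_const: "n \<ge> 1 \<Longrightarrow> EU n k (\<lambda>_. c) = c"
  by (induction k) simp_all

lemma EU_mono: "n \<ge> 1 \<Longrightarrow> (\<And>q. set q \<subseteq> {1..n} \<Longrightarrow> length q = k \<Longrightarrow> g q \<le> h q) \<Longrightarrow> EU n k g \<le> EU n k h"
proof (induction k arbitrary: g h)
  case 0 then show ?case by simp
next
  case (Suc k)
  have "(\<Sum>x\<in>{1..n}. EU n k (\<lambda>q. g (x # q))) \<le> (\<Sum>x\<in>{1..n}. EU n k (\<lambda>q. h (x # q)))"
    by (rule sum_mono, rule Suc.IH) (use Suc.prems in auto)
  then show ?case by (simp add: divide_right_mono)
qed

lemma EU_append: "EU n (a + b) g = EU n a (\<lambda>q1. EU n b (\<lambda>q2. g (q1 @ q2)))"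
  by (induction a arbitrary: g) simp_all

lemma EU_miss: "n \<ge> 1 \<Longrightarrow> A \<subseteq> {1..n} \<Longrightarrow>
   EU n k (\<lambda>q. if set q \<inter> A = {} then 1 else 0) = (1 - real (card A) / real n) ^ k"
proof (induction k)
  case 0 then show ?case by simp
next
  case (Suc k)
  have "(\<Sum>x\<in>{1..n}. EU n k (\<lambda>q. if set (x # q) \<inter> A = {} then 1 else 0))
      = (\<Sum>x\<in>{1..n}. (if x \<in> A then 0 else 1) * (1 - real (card A) / real n) ^ k)"
  proof (rule sum.cong[OF refl])
    fix x
    show "EU n k (\<lambda>q. if set (x # q) \<inter> A = {} then 1 else 0) = (if x \<in> A then 0 else 1) * (1 - real (card A) / real n) ^ k"
      using Suc by (cases "x \<in> A") (simp_all add: EU_const)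
  qed
  also have "\<dots> = real (card ({1..n} - A)) * (1 - real (card A) / real n) ^ k"
    by (simp add: sum.If_cases sum_distrib_right[symmetric] Diff_eq)
  also have "real (card ({1..n} - A)) = real n - real (card A)"
    using Suc.prems card_mono[of "{1..n}" A] by (simp add: card_Diff_subset finite_subset of_nat_diff)
  finally show ?case using Suc.prems by (simp add: field_simps)
qed

definition erasedE :: "adversary \<Rightarrow> nat list \<Rightarrow> nat list \<Rightarrow> bool" where
  "erasedE adv pre q \<longleftrightarrow> (\<exists>i<length q. (pre@q)!(length pre+i) \<in> erased_before adv (pre@q) (length pre+i))"

lemma erased_before_prefix: "erased_before adv (pre @ q) (length pre) = erased_before adv pre (length pre)"
  unfolding erased_before_def by (rule SUP_cong) auto

lemma card_erased_before: "valid_adversary t adv \<Longrightarrow> finite (erased_before adv h i) \<and> card (erased_before adv h i) \<le> i * t"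
proof -
  assume v: "valid_adversary t adv"
  have fin: "finite (erased_before adv h i)" using v unfolding erased_before_def valid_adversary_def by auto
  have "card (erased_before adv h i) \<le> (\<Sum>j<i. card (adv (take (Suc j) h)))"
    unfolding erased_before_def by (rule card_UN_le) simp
  also have "\<dots> \<le> (\<Sum>j<i. t)" by (rule sum_mono) (use v in \<open>auto simp: valid_adversary_def\<close>)
  finally show ?thesis using fin by simp
qed

lemma ex_lessSuc: "(\<exists>i<Suc m. P i) \<longleftrightarrow> P 0 \<or> (\<exists>i<m. P (Suc i))"
  by (auto simp: less_Suc_eq_0_disj)

lemma erasedE_Cons: "erasedE adv pre (x # q) \<longleftrightarrow>
   x \<in> erased_before adv pre (length pre) \<or> erasedE adv (pre @ [x]) q"
proof -
  have "erasedE adv pre (x # q) \<longleftrightarrow> (\<exists>i<Suc (length q). (pre@x#q)!(length pre+i) \<in> erased_before adv (pre@x#q) (length pre+i))"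
    unfolding erasedE_def by simp
  also have "\<dots> \<longleftrightarrow> (pre@x#q)!(length pre) \<in> erased_before adv (pre@x#q) (length pre) \<or>
      (\<exists>i<length q. (pre@x#q)!(length pre+Suc i) \<in> erased_before adv (pre@x#q) (length pre+Suc i))"
    by (simp only: ex_lessSuc add_0_right add_Suc_right)
  also have "(pre@x#q)!(length pre) \<in> erased_before adv (pre@x#q) (length pre) \<longleftrightarrow> x \<in> erased_before adv pre (length pre)"
    using erased_before_prefix[of adv pre "x#q"] by simp
  also have "(\<exists>i<length q. (pre@x#q)!(length pre+Suc i) \<in> erased_before adv (pre@x#q) (length pre+Suc i))
     \<longleftrightarrow> erasedE adv (pre @ [x]) q"
    unfolding erasedE_def by (simp add: nth_append)
  finally show ?thesis .
qed

lemma EU_erased: assumes v: "valid_adversary t adv" and n: "n \<ge> 1"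
  shows "EU n k (\<lambda>q. if erasedE adv pre q then 1 else 0) \<le> (\<Sum>i<k. real ((length pre + i) * t)) / real n"
  using n
proof (induction k arbitrary: pre)
  case 0 then show ?case by (simp add: erasedE_def)
next
  case (Suc k)
  let ?E = "erased_before adv pre (length pre)"
  let ?B = "(\<Sum>i<k. real ((length (pre @ [0]) + i) * t)) / real n"
  have "(\<Sum>x\<in>{1..n}. EU n k (\<lambda>q. if erasedE adv pre (x # q) then 1 else 0))
     \<le> (\<Sum>x\<in>{1..n}. (if x \<in> ?E then 1 else 0) + ?B)"
  proof (rule sum_mono)
    fix x assume x: "x \<in> {1..n}"
    have "EU n k (\<lambda>q. if erasedE adv pre (x # q) then 1 else 0) \<le>
          EU n k (\<lambda>q. (if x \<in> ?E then 1 else 0) + (if erasedE adv (pre@[x]) q then 1 else 0))"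
      by (rule EU_mono[OF Suc.prems]) (auto simp: erasedE_Cons)
    also have "\<dots> = (if x \<in> ?E then 1 else 0) + EU n k (\<lambda>q. if erasedE adv (pre@[x]) q then 1 else 0)"
      by (simp add: EU_add EU_const[OF Suc.prems])
    also have "\<dots> \<le> (if x \<in> ?E then 1 else 0) + ?B"
      using Suc.IH[OF Suc.prems, of "pre @ [x]"] by simp
    finally show "EU n k (\<lambda>q. if erasedE adv pre (x # q) then 1 else 0) \<le> (if x \<in> ?E then 1 else 0) + ?B" .
  qed
  also have "\<dots> = real (card ({1..n} \<inter> ?E)) + real n * ?B"
    by (simp add: sum.distrib sum.If_cases)
  also have "real (card ({1..n} \<inter> ?E)) \<le> real (length pre * t)"
  proof -
    have "card ({1..n} \<inter> ?E) \<le> card ?E" using card_erased_before[OF v] by (intro card_mono) auto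
    then have "card ({1..n} \<inter> ?E) \<le> length pre * t" using card_erased_before[OF v, of pre "length pre"] by linarith
    then show ?thesis by (simp only: of_nat_le_iff)
  qed
  finally have 1: "(\<Sum>x\<in>{1..n}. EU n k (\<lambda>q. if erasedE adv pre (x # q) then 1 else 0)) \<le> real (length pre * t) + real n * ?B"
    by simp
  have 2: "(\<Sum>i<Suc k. real ((length pre + i) * t)) = real (length pre * t) + real n * ?B"
    using Suc.prems by (simp add: sum.lessThan_Suc_shift algebra_simps del: sum.lessThan_Suc)
  show ?case using 1 2 Suc.prems by (simp add: divide_right_mono)
qed



lemma pow_le_inv: fixes z :: real assumes "0 \<le> z" "z \<le> 1"
  shows "(1 - z) ^ s \<le> 1 / (1 + real s * z)"
proof -
  have b: "1 + real s * z \<le> (1 + z) ^ s" by (rule Bernoulli_inequality) (use assms in simp)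
  have "(1 - z) ^ s * (1 + real s * z) \<le> (1 - z) ^ s * (1 + z) ^ s"
    by (rule mult_left_mono[OF b]) (use assms in simp)
  also have "\<dots> = (1 - z*z) ^ s" by (simp add: power_mult_distrib[symmetric] algebra_simps)
  also have "\<dots> \<le> 1" by (rule power_le_one) (use assms in \<open>auto intro: mult_le_one\<close>)
  finally have "(1 - z) ^ s * (1 + real s * z) \<le> 1" .
  moreover have "0 < 1 + real s * z" using assms by (simp add: add_pos_nonneg)
  ultimately show ?thesis by (simp add: pos_le_divide_eq)
qed

lemma inv_bound: fixes y \<mu> :: real assumes "0 \<le> y" "0 \<le> \<mu>"
  shows "1 / (1 + y) \<le> 1/(1+\<mu>) + (\<mu> - y)/(1+\<mu>)^2 + (\<mu> - y)^2/(1+\<mu>)^2"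
proof -
  have e: "1/(1+y) = 1/(1+\<mu>) + (\<mu> - y)/(1+\<mu>)^2 + (\<mu> - y)^2/((1+\<mu>)^2*(1+y))"
  proof -
    have p: "1 + y \<noteq> 0" "1 + \<mu> \<noteq> 0" using assms by auto
    show ?thesis using p by (simp add: divide_simps power2_eq_square) (simp add: algebra_simps)
  qed
  have "(\<mu> - y)^2/((1+\<mu>)^2*(1+y)) \<le> (\<mu> - y)^2/(1+\<mu>)^2"
    using assms by (intro divide_left_mono) (auto intro: mult_pos_pos simp: add_pos_nonneg)
  then show ?thesis using e by linarith
qed

definition Ind :: "nat set \<Rightarrow> nat list \<Rightarrow> real" where
  "Ind A q = (if set q \<inter> A = {} then 0 else 1)"

lemma EU_Ind: "n \<ge> 1 \<Longrightarrow> A \<subseteq> {1..n} \<Longrightarrow> EU n k (Ind A) = 1 - (1 - real (card A) / real n) ^ k"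
proof -
  assume a: "n \<ge> 1" "A \<subseteq> {1..n}"
  have "Ind A = (\<lambda>q. 1 - (if set q \<inter> A = {} then 1 else 0))" by (auto simp: Ind_def fun_eq_iff)
  then show ?thesis using a by (simp add: EU_diff EU_const EU_miss)
qed

lemma EU_Ind2: assumes "n \<ge> 1" "A \<subseteq> {1..n}" "B \<subseteq> {1..n}" "A \<inter> B = {}"
  shows "EU n k (\<lambda>q. Ind A q * Ind B q) \<le> EU n k (Ind A) * EU n k (Ind B)"
proof -
  let ?m = "\<lambda>C. (1 - real (card C) / real n) ^ k"
  have fa: "finite A" "finite B" using assms finite_subset[OF _ finite_atLeastAtMost] by auto
  have "(\<lambda>q. Ind A q * Ind B q) = (\<lambda>q. ((1 - (if set q \<inter> A = {} then 1 else 0)) - (if set q \<inter> B = {} then 1 else 0))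
      + (if set q \<inter> (A \<union> B) = {} then 1 else 0))"
    by (auto simp: Ind_def fun_eq_iff)
  then have "EU n k (\<lambda>q. Ind A q * Ind B q) = 1 - ?m A - ?m B + ?m (A \<union> B)"
    using assms by (simp add: EU_add EU_diff EU_const EU_miss)
  also have "?m (A \<union> B) \<le> ?m A * ?m B"
  proof -
    have c: "real (card (A \<union> B)) = real (card A) + real (card B)" using fa assms by (simp add: card_Un_disjoint)
    have cab: "card (A \<union> B) \<le> n" using card_mono[of "{1..n}" "A \<union> B"] assms by auto
    have "0 \<le> 1 - real (card (A \<union> B)) / real n" using cab assms by (simp add: field_simps)
    moreover have "1 - real (card (A \<union> B)) / real n \<le> (1 - real (card A)/real n) * (1 - real (card B) / real n)"
    proof -
      have np: "real n > 0" using assms by simp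
      have "(1 - real (card A)/real n) * (1 - real (card B) / real n) = 1 - real (card (A \<union> B)) / real n + real (card A) * real (card B) / (real n * real n)"
        using c np by (simp add: field_simps)
      moreover have "0 \<le> real (card A) * real (card B) / (real n * real n)" by simp
      ultimately show ?thesis by linarith
    qed
    ultimately have "?m (A \<union> B) \<le> ((1 - real (card A)/real n) * (1 - real (card B) / real n)) ^ k"
      by (simp add: power_mono)
    then show ?thesis by (simp add: power_mult_distrib)
  qed
  finally show ?thesis using assms by (simp add: EU_Ind algebra_simps)
qed

lemma Ind_sq: "Ind A q * Ind A q = Ind A q" by (simp add: Ind_def)

lemma core:
  fixes V :: "'a set" and L :: "'a \<Rightarrow> nat set" and w :: "'a \<Rightarrow> real"
  assumes n: "n \<ge> 1" and fin: "finite V" and sub: "\<forall>a\<in>V. L a \<subseteq> {1..n}"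
    and disj: "\<forall>a\<in>V. \<forall>b\<in>V. a \<noteq> b \<longrightarrow> L a \<inter> L b = {}"
    and w: "\<forall>a\<in>V. 0 \<le> w a \<and> w a \<le> real (card (L a))"
  shows "EU n s (\<lambda>q. 1/(1 + (real s/real n) * (\<Sum>a\<in>V. w a * Ind (L a) q)))
     \<le> 2/(1 + (real s / real n) * (\<Sum>a\<in>V. w a * (1 - (1 - real (card (L a))/real n)^s)))"
proof -
  define c where "c = real s / real n"
  define P where "P a = 1 - (1 - real (card (L a))/real n)^s" for a
  define \<mu> where "\<mu> = c * (\<Sum>a\<in>V. w a * P a)"
  define Y where "Y q = c * (\<Sum>a\<in>V. w a * Ind (L a) q)" for q
  have np: "real n > 0" using n by simp
  have c0: "c \<ge> 0" unfolding c_def by simp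
  have cardL: "real (card (L a)) \<le> real n" if "a \<in> V" for a
    using card_mono[of "{1..n}" "L a"] sub that by auto
  have EP: "EU n s (Ind (L a)) = P a" if "a \<in> V" for a
    using EU_Ind[OF n] sub that unfolding P_def by auto
  have P01: "0 \<le> P a \<and> P a \<le> 1" if "a \<in> V" for a
  proof -
    have "0 \<le> 1 - real (card (L a))/real n" "1 - real (card (L a))/real n \<le> 1"
      using cardL[OF that] np by (auto simp: field_simps)
    then show ?thesis unfolding P_def by (auto intro: power_le_one)
  qed
  have mu0: "\<mu> \<ge> 0" unfolding \<mu>_def using c0 w P01 by (auto intro!: mult_nonneg_nonneg sum_nonneg)
  have Y0: "Y q \<ge> 0" for q unfolding Y_def using c0 w by (auto intro!: mult_nonneg_nonneg sum_nonneg simp: Ind_def)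
  have EY: "EU n s Y = \<mu>"
    unfolding Y_def \<mu>_def by (simp add: EU_cmult EU_sum EP)
  have YY: "Y q * Y q = c * c * (\<Sum>a\<in>V. \<Sum>b\<in>V. (w a * w b) * (Ind (L a) q * Ind (L b) q))" for q
    unfolding Y_def by (simp add: sum_product algebra_simps)
  have EYY0: "EU n s (\<lambda>q. Y q * Y q) = c * c * (\<Sum>a\<in>V. \<Sum>b\<in>V. (w a * w b) * EU n s (\<lambda>q. Ind (L a) q * Ind (L b) q))"
    by (simp add: YY EU_cmult EU_sum)
  have pair: "(w a * w b) * EU n s (\<lambda>q. Ind (L a) q * Ind (L b) q) \<le> (w a * P a) * (w b * P b) + (if a = b then w a * w a * (P a - P a * P a) else 0)"
    if ab: "a \<in> V" "b \<in> V" for a b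
  proof (cases "a = b")
    case True
    then show ?thesis using EP[OF ab(1)] by (simp add: Ind_sq algebra_simps)
  next
    case False
    have "EU n s (\<lambda>q. Ind (L a) q * Ind (L b) q) \<le> P a * P b"
      using EU_Ind2[OF n, of "L a" "L b" s] sub disj ab False EP by auto
    then have "(w a * w b) * EU n s (\<lambda>q. Ind (L a) q * Ind (L b) q) \<le> (w a * w b) * (P a * P b)"
      using w ab by (intro mult_left_mono) auto
    then show ?thesis using False by (simp add: algebra_simps)
  qed
  have "(\<Sum>a\<in>V. \<Sum>b\<in>V. (w a * w b) * EU n s (\<lambda>q. Ind (L a) q * Ind (L b) q))
     \<le> (\<Sum>a\<in>V. \<Sum>b\<in>V. (w a * P a) * (w b * P b) + (if a = b then w a * w a * (P a - P a * P a) else 0))"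
    by (intro sum_mono) (use pair in auto)
  also have "\<dots> = (\<Sum>a\<in>V. w a * P a) * (\<Sum>a\<in>V. w a * P a) + (\<Sum>a\<in>V. w a * w a * (P a - P a * P a))"
    using fin by (simp add: sum.distrib sum_product sum.delta)
  finally have S1: "(\<Sum>a\<in>V. \<Sum>b\<in>V. (w a * w b) * EU n s (\<lambda>q. Ind (L a) q * Ind (L b) q))
     \<le> (\<Sum>a\<in>V. w a * P a) * (\<Sum>a\<in>V. w a * P a) + (\<Sum>a\<in>V. w a * w a * (P a - P a * P a))" .
  have var: "c * (w a * w a * (P a - P a * P a)) \<le> w a * P a" if a: "a \<in> V" for a
  proof -
    have wn: "w a / real n \<le> 1" "0 \<le> w a / real n" using w a cardL[OF a] np by (auto simp: field_simps)
    have m1: "1 - P a \<le> (1 - w a / real n) ^ s"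
      unfolding P_def using w a wn np cardL[OF a] by (auto intro!: power_mono simp: field_simps)
    also have "\<dots> \<le> 1 / (1 + real s * (w a / real n))" by (rule pow_le_inv[OF wn(2) wn(1)])
    finally have m2: "1 - P a \<le> 1 / (1 + c * w a)" unfolding c_def by simp
    have cw0: "0 \<le> c * w a" using c0 w a by simp
    have "c * w a * (1 - P a) \<le> c * w a * (1 / (1 + c * w a))"
      by (rule mult_left_mono[OF m2 cw0])
    also have "\<dots> \<le> 1" using cw0 by (simp add: field_simps)
    finally have "c * w a * (1 - P a) \<le> 1" .
    then have "(c * w a * (1 - P a)) * (w a * P a) \<le> 1 * (w a * P a)"
      by (rule mult_right_mono) (use w a P01[OF a] in simp)
    then show ?thesis by (simp add: algebra_simps)
  qed
  have EYY: "EU n s (\<lambda>q. Y q * Y q) \<le> \<mu> * \<mu> + \<mu>"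
  proof -
    have "EU n s (\<lambda>q. Y q * Y q) \<le> c * c * ((\<Sum>a\<in>V. w a * P a) * (\<Sum>a\<in>V. w a * P a) + (\<Sum>a\<in>V. w a * w a * (P a - P a * P a)))"
      unfolding EYY0 by (rule mult_left_mono[OF S1]) (use c0 in simp)
    also have "\<dots> = \<mu> * \<mu> + c * (\<Sum>a\<in>V. c * (w a * w a * (P a - P a * P a)))"
      unfolding \<mu>_def by (simp add: sum_distrib_left algebra_simps)
    also have "\<dots> \<le> \<mu> * \<mu> + c * (\<Sum>a\<in>V. w a * P a)"
      by (intro add_left_mono mult_left_mono sum_mono var c0) auto
    finally show ?thesis unfolding \<mu>_def by simp
  qed
  define D where "D = 1 / (1+\<mu>)^2"
  have D0: "D \<ge> 0" unfolding D_def by simp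
  have pt: "1 / (1 + Y q) \<le> (1/(1+\<mu>) + \<mu> * D + \<mu> * \<mu> * D) + (- D - 2 * \<mu> * D) * Y q + D * (Y q * Y q)" for q
    using inv_bound[OF Y0[of q] mu0] unfolding D_def by (simp add: power2_eq_square algebra_simps add_divide_distrib diff_divide_distrib)
  have "EU n s (\<lambda>q. 1 / (1 + Y q)) \<le> EU n s (\<lambda>q. (1/(1+\<mu>) + \<mu> * D + \<mu> * \<mu> * D) + (- D - 2 * \<mu> * D) * Y q + D * (Y q * Y q))"
    by (rule EU_mono[OF n]) (rule pt)
  also have "\<dots> = (1/(1+\<mu>) + \<mu> * D + \<mu> * \<mu> * D) + (- D - 2 * \<mu> * D) * \<mu> + D * EU n s (\<lambda>q. Y q * Y q)"
    using n by (simp add: EU_add EU_cmult EU_const EY)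
  also have "\<dots> \<le> (1/(1+\<mu>) + \<mu> * D + \<mu> * \<mu> * D) + (- D - 2 * \<mu> * D) * \<mu> + D * (\<mu> * \<mu> + \<mu>)"
    by (intro add_left_mono mult_left_mono EYY D0)
  also have "\<dots> = 1/(1+\<mu>) + \<mu> * D" by (simp add: algebra_simps)
  also have "\<dots> \<le> 2 / (1 + \<mu>)"
  proof -
    have e: "\<mu> * D = (\<mu>/(1+\<mu>)) * (1/(1+\<mu>))" by (simp add: D_def power2_eq_square)
    have "\<mu>/(1+\<mu>) \<le> 1" using mu0 by simp
    then have "(\<mu>/(1+\<mu>)) * (1/(1+\<mu>)) \<le> 1 * (1/(1+\<mu>))" by (rule mult_right_mono) (use mu0 in simp)
    then have "\<mu> * D \<le> 1/(1+\<mu>)" using e by simp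
    then show ?thesis by simp
  qed
  finally show ?thesis unfolding Y_def \<mu>_def c_def P_def .
qed



lemma mu_lower:
  fixes V :: "'a set" and L :: "'a \<Rightarrow> nat set" and w :: "'a \<Rightarrow> real"
  assumes n: "n \<ge> 1" and sub: "\<forall>a\<in>V. L a \<subseteq> {1..n}"
    and w: "\<forall>a\<in>V. 0 \<le> w a \<and> w a \<le> real (card (L a))"
  shows "(\<Sum>a\<in>V. (real s * w a / real n) * ((real s * w a / real n) / (1 + real s * w a / real n)))
     \<le> (real s / real n) * (\<Sum>a\<in>V. w a * (1 - (1 - real (card (L a))/real n)^s))"
proof -
  have np: "real n > 0" using n by simp
  have "(\<Sum>a\<in>V. (real s * w a / real n) * ((real s * w a / real n) / (1 + real s * w a / real n)))
     \<le> (\<Sum>a\<in>V. (real s / real n) * (w a * (1 - (1 - real (card (L a))/real n)^s)))"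
  proof (rule sum_mono)
    fix a assume a: "a \<in> V"
    have cardL: "real (card (L a)) \<le> real n" using card_mono[of "{1..n}" "L a"] sub a by auto
    have wn: "w a / real n \<le> 1" "0 \<le> w a / real n" using w a cardL np by (auto simp: field_simps)
    have "(1 - real (card (L a))/real n)^s \<le> (1 - w a / real n) ^ s"
      using w a wn np cardL by (auto intro!: power_mono simp: field_simps)
    also have "\<dots> \<le> 1 / (1 + real s * (w a / real n))" by (rule pow_le_inv[OF wn(2) wn(1)])
    finally have m: "(1 - real (card (L a))/real n)^s \<le> 1 / (1 + real s * w a / real n)" by simp
    have x0: "0 \<le> real s * w a / real n" using w a by simp
    have "(real s * w a / real n) / (1 + real s * w a / real n) = 1 - 1 / (1 + real s * w a / real n)"
      using x0 by (simp add: field_simps)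
    also have "\<dots> \<le> 1 - (1 - real (card (L a))/real n)^s" using m by simp
    finally have "(real s * w a / real n) * ((real s * w a / real n) / (1 + real s * w a / real n))
        \<le> (real s * w a / real n) * (1 - (1 - real (card (L a))/real n)^s)"
      by (rule mult_left_mono) (use x0 in simp)
    then show "(real s * w a / real n) * ((real s * w a / real n) / (1 + real s * w a / real n))
        \<le> (real s / real n) * (w a * (1 - (1 - real (card (L a))/real n)^s))" by simp
  qed
  then show ?thesis by (simp add: sum_distrib_left)
qed

lemma cs_bound:
  fixes x :: "'a \<Rightarrow> real"
  assumes fin: "finite V" and x0: "\<forall>a\<in>V. 0 \<le> x a"
  shows "(\<Sum>a\<in>V. x a)^2 \<le> (\<Sum>a\<in>V. x a * (x a / (1 + x a))) * (real (card V) + (\<Sum>a\<in>V. x a))"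
proof -
  have "(\<Sum>a\<in>V. (x a / sqrt (1 + x a)) * sqrt (1 + x a))^2
     \<le> (\<Sum>a\<in>V. (x a / sqrt (1 + x a))^2) * (\<Sum>a\<in>V. (sqrt (1 + x a))^2)"
    by (rule Cauchy_Schwarz_ineq_sum)
  moreover have "(\<Sum>a\<in>V. (x a / sqrt (1 + x a)) * sqrt (1 + x a)) = (\<Sum>a\<in>V. x a)"
    by (rule sum.cong) (use x0 in auto)
  moreover have "(\<Sum>a\<in>V. (x a / sqrt (1 + x a))^2) = (\<Sum>a\<in>V. x a * (x a / (1 + x a)))"
    by (rule sum.cong) (use x0 in \<open>auto simp: power_divide power2_eq_square\<close>)
  moreover have "(\<Sum>a\<in>V. (sqrt (1 + x a))^2) = real (card V) + (\<Sum>a\<in>V. x a)"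
    using x0 by (simp add: sum.distrib)
  ultimately show ?thesis by simp
qed

lemma final_arith:
  fixes X r :: real assumes "r \<ge> 1" "X \<ge> 12 * sqrt r" "v \<le> r" "v \<ge> 0"
  shows "9 * (v + X) \<le> X^2"
proof -
  define y where "y = sqrt r"
  have y1: "y \<ge> 1" using assms unfolding y_def by simp
  have r: "r = y^2" using assms unfolding y_def by simp
  have X: "X \<ge> 12 * y" using assms unfolding y_def by simp
  have "X^2 - 9*X \<ge> (12*y)^2 - 9*(12*y)"
  proof -
    have "X^2 - 9*X - ((12*y)^2 - 9*(12*y)) = (X - 12*y) * (X + 12*y - 9)" by (simp add: algebra_simps power2_eq_square)
    moreover have "(X - 12*y) * (X + 12*y - 9) \<ge> 0" using X y1 by (intro mult_nonneg_nonneg) auto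
    ultimately show ?thesis by linarith
  qed
  moreover have "(12*y)^2 - 9*(12*y) \<ge> 9 * y^2"
  proof -
    have "y*(135*y-108) \<ge> 0" using y1 by (intro mult_nonneg_nonneg) auto
    then show ?thesis by (simp add: power2_eq_square algebra_simps)
  qed
  ultimately have "X^2 - 9*X \<ge> 9 * r" using r by linarith
  then show ?thesis using assms by (simp add: distrib_left)
qed



definition viol :: "(nat \<Rightarrow> real) \<Rightarrow> nat \<Rightarrow> nat \<Rightarrow> bool" where
  "viol f x y \<longleftrightarrow> x < y \<and> f y < f x"

definition disjP :: "(nat \<times> nat) set \<Rightarrow> bool" where
  "disjP P \<longleftrightarrow> (\<forall>p\<in>P. \<forall>q\<in>P. p \<noteq> q \<longrightarrow> fst p \<noteq> fst q \<and> fst p \<noteq> snd q \<and> snd p \<noteq> fst q \<and> snd p \<noteq> snd q)"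

definition Pairs :: "nat \<Rightarrow> (nat \<Rightarrow> real) \<Rightarrow> (nat \<times> nat) set" where
  "Pairs n f = {(x,y). x \<in> {1..n} \<and> y \<in> {1..n} \<and> viol f x y}"

lemma finite_Pairs: "finite (Pairs n f)"
  by (rule finite_subset[of _ "{1..n} \<times> {1..n}"]) (auto simp: Pairs_def)

lemma matching:
  assumes n: "n \<ge> 1" and far: "far_from_sorted n \<epsilon> f"
  shows "\<exists>P. P \<subseteq> Pairs n f \<and> disjP P \<and> \<epsilon> * real n \<le> 2 * real (card P)"
proof -
  let ?S = "\<lambda>P. P \<subseteq> Pairs n f \<and> disjP P"
  have "\<exists>P. ?S P \<and> (\<forall>Q. ?S Q \<longrightarrow> card Q \<le> card P)"
  proof (rule ex_has_greatest_nat[of ?S "{}" card "Suc (card (Pairs n f))"])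
    show "?S {}" by (simp add: disjP_def)
    show "\<forall>Q. ?S Q \<longrightarrow> card Q < Suc (card (Pairs n f))"
      using card_mono[OF finite_Pairs] by (simp add: le_imp_less_Suc)
  qed
  then obtain P where P: "P \<subseteq> Pairs n f" "disjP P" and max: "\<And>Q. ?S Q \<Longrightarrow> card Q \<le> card P" by blast
  have finP: "finite P" using P finite_subset finite_Pairs by blast
  define E where "E = fst ` P \<union> snd ` P"
  define K where "K = {1..n} - E"
  have Ksorted: "f x \<le> f y" if xy: "x \<in> K" "y \<in> K" "x < y" for x y
  proof (rule ccontr)
    assume "\<not> f x \<le> f y"
    then have v: "(x,y) \<in> Pairs n f" using xy by (auto simp: Pairs_def viol_def K_def)
    have nin: "(x,y) \<notin> P" using xy by (force simp: K_def E_def)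
    have "?S (insert (x,y) P)"
      using P v xy unfolding disjP_def K_def E_def by (auto simp: image_iff)
    then have "card (insert (x,y) P) \<le> card P" by (rule max)
    then show False using nin finP by simp
  qed
  define A where "A z = {u\<in>K. u \<le> z}" for z
  define g where "g z = (if A z \<noteq> {} then Max (f ` A z) else (if K = {} then 0 else Min (f ` K)))" for z
  have finK: "finite K" unfolding K_def by simp
  have finA: "finite (A z)" for z unfolding A_def using finK by simp
  have gs: "sorted_seq n g" unfolding sorted_seq_def
  proof (intro ballI impI)
    fix x y assume "x \<in> {1..n}" "y \<in> {1..n}" "x < y"
    then have sub: "A x \<subseteq> A y" unfolding A_def by auto
    show "g x \<le> g y"
    proof (cases "A x = {}")
      case False
      then have "A y \<noteq> {}" using sub by auto
      moreover have "Max (f ` A x) \<le> Max (f ` A y)" using False sub finA by (intro Max_mono image_mono) auto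
      ultimately show ?thesis using False by (simp add: g_def)
    next
      case True
      show ?thesis
      proof (cases "A y = {}")
        case True2: True
        then show ?thesis using True by (simp add: g_def)
      next
        case False
        then obtain u where u: "u \<in> A y" by auto
        have uK: "u \<in> K" using u unfolding A_def by simp
        have "Min (f ` K) \<le> f u" using uK finK by simp
        also have "f u \<le> Max (f ` A y)" using u finA by simp
        finally show ?thesis using True False uK by (auto simp: g_def)
      qed
    qed
  qed
  have gf: "g z = f z" if z: "z \<in> K" for z
  proof -
    have zA: "z \<in> A z" using z unfolding A_def by simp
    have "Max (f ` A z) = f z"
    proof (rule Max_eqI)
      show "finite (f ` A z)" using finA by simp
      show "f z \<in> f ` A z" using zA by simp
      fix v assume "v \<in> f ` A z"
      then obtain u where u: "u \<in> K" "u \<le> z" "v = f u" unfolding A_def by auto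
      show "v \<le> f z" using Ksorted[OF u(1) z] u by (cases "u = z") auto
    qed
    then show ?thesis using zA by (auto simp: g_def)
  qed
  have "\<epsilon> \<le> seq_dist n f g" using far gs unfolding far_from_sorted_def by blast
  also have "seq_dist n f g \<le> real (card E) / real n"
  proof -
    have "{x\<in>{1..n}. f x \<noteq> g x} \<subseteq> E" using gf unfolding K_def by force
    then have "card {x\<in>{1..n}. f x \<noteq> g x} \<le> card E" using finP unfolding E_def by (intro card_mono) auto
    then show ?thesis unfolding seq_dist_def by (simp add: divide_right_mono)
  qed
  also have "card E \<le> 2 * card P"
  proof -
    have "card E \<le> card (fst ` P) + card (snd ` P)" unfolding E_def by (rule card_Un_le)
    also have "\<dots> \<le> card P + card P" by (intro add_mono card_image_le finP)
    finally show ?thesis by simp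
  qed
  finally have "\<epsilon> \<le> real (2 * card P) / real n" using n by (simp add: divide_right_mono)
  then show ?thesis using P n by (auto simp: field_simps)
qed

lemma median:
  fixes X :: "nat set" assumes "finite X"
  shows "\<exists>\<theta>. card X \<le> 2 * card {x\<in>X. x \<le> \<theta>} \<and> card X \<le> 2 * card {x\<in>X. \<theta> \<le> x}"
proof -
  let ?Q = "\<lambda>\<theta>. card X \<le> 2 * card {x\<in>X. x \<le> \<theta>}"
  have ex: "?Q (Max (insert 0 X))"
  proof -
    have "{x\<in>X. x \<le> Max (insert 0 X)} = X" using assms by auto
    then show ?thesis by simp
  qed
  define \<theta> where "\<theta> = (LEAST \<theta>. ?Q \<theta>)"
  have Q: "?Q \<theta>" unfolding \<theta>_def by (rule LeastI[of ?Q, OF ex])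
  have "card X \<le> 2 * card {x\<in>X. \<theta> \<le> x}"
  proof (cases "\<theta> = 0")
    case True
    then show ?thesis by simp
  next
    case False
    then have nq: "\<not> ?Q (\<theta> - 1)" unfolding \<theta>_def using not_less_Least[of "\<theta> - 1" ?Q] False
      unfolding \<theta>_def by auto
    have split: "X = {x\<in>X. x \<le> \<theta> - 1} \<union> {x\<in>X. \<theta> \<le> x}" using False by auto
    have "card X \<le> card {x\<in>X. x \<le> \<theta> - 1} + card {x\<in>X. \<theta> \<le> x}"
      by (subst split) (rule card_Un_le)
    then show ?thesis using nq by linarith
  qed
  then show ?thesis using Q by blast
qed

lemma classes:
  assumes n: "n \<ge> 1" and far: "far_from_sorted n \<epsilon> f"
  shows "\<exists>L R w. (\<forall>a\<in>f ` {1..n}. L a \<subseteq> {1..n} \<and> R a \<subseteq> {1..n} \<and> 0 \<le> w a \<and> w a \<le> real (card (L a)) \<and> w a \<le> real (card (R a)))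
     \<and> (\<forall>a\<in>f ` {1..n}. \<forall>b\<in>f ` {1..n}. a \<noteq> b \<longrightarrow> L a \<inter> L b = {} \<and> R a \<inter> R b = {})
     \<and> (\<forall>a\<in>f ` {1..n}. \<forall>x\<in>L a. \<forall>y\<in>R a. viol f x y)
     \<and> \<epsilon> * real n \<le> 4 * (\<Sum>a\<in>f ` {1..n}. w a)"
proof -
  obtain P where P: "P \<subseteq> Pairs n f" "disjP P" and eP: "\<epsilon> * real n \<le> 2 * real (card P)"
    using matching[OF n far] by blast
  have finP: "finite P" using P finite_subset finite_Pairs by blast
  have injf: "inj_on fst P" and injs: "inj_on snd P" using P(2) unfolding disjP_def inj_on_def by blast+
  define V where "V = f ` {1..n}"
  define Pa where "Pa a = {p\<in>P. f (fst p) = a}" for a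
  define \<theta> where "\<theta> a = (SOME \<theta>. card (fst ` Pa a) \<le> 2 * card {x\<in>fst ` Pa a. x \<le> \<theta>} \<and> card (fst ` Pa a) \<le> 2 * card {x\<in>fst ` Pa a. \<theta> \<le> x})" for a
  have th: "card (fst ` Pa a) \<le> 2 * card {x\<in>fst ` Pa a. x \<le> \<theta> a} \<and> card (fst ` Pa a) \<le> 2 * card {x\<in>fst ` Pa a. \<theta> a \<le> x}" for a
    unfolding \<theta>_def by (rule someI_ex, rule median) (use finP in \<open>simp add: Pa_def\<close>)
  define L where "L a = {x\<in>fst ` Pa a. x \<le> \<theta> a}" for a
  define R where "R a = snd ` {p\<in>Pa a. \<theta> a \<le> fst p}" for a
  define w where "w a = real (min (card (L a)) (card (R a)))" for a
  have PaP: "Pa a \<subseteq> P" for a unfolding Pa_def by auto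
  have cardR: "card (R a) = card {x\<in>fst ` Pa a. \<theta> a \<le> x}" for a
  proof -
    have "card (R a) = card {p\<in>Pa a. \<theta> a \<le> fst p}" unfolding R_def
      by (rule card_image) (rule inj_on_subset[OF injs], use PaP in auto)
    also have "\<dots> = card (fst ` {p\<in>Pa a. \<theta> a \<le> fst p})"
      by (rule card_image[symmetric]) (rule inj_on_subset[OF injf], use PaP in auto)
    also have "fst ` {p\<in>Pa a. \<theta> a \<le> fst p} = {x\<in>fst ` Pa a. \<theta> a \<le> x}" by auto
    finally show ?thesis .
  qed
  have cardPa: "card (fst ` Pa a) = card (Pa a)" for a
    by (rule card_image) (rule inj_on_subset[OF injf PaP])
  have w2: "real (card (Pa a)) \<le> 2 * w a" for a
    using th[of a] cardR[of a] cardPa[of a] unfolding w_def L_def by auto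
  have PU: "P = (\<Union>a\<in>V. Pa a)" using P(1) unfolding V_def Pa_def Pairs_def by fastforce
  have "card P = (\<Sum>a\<in>V. card (Pa a))" unfolding PU
    by (rule card_UN_disjoint) (use finP PaP finite_subset in \<open>auto simp: V_def Pa_def\<close>)
  then have "real (card P) = (\<Sum>a\<in>V. real (card (Pa a)))" by simp
  also have "\<dots> \<le> (\<Sum>a\<in>V. 2 * w a)" by (rule sum_mono) (rule w2)
  finally have "real (card P) \<le> (\<Sum>a\<in>V. 2 * w a)" .
  then have cP: "real (card P) \<le> 2 * (\<Sum>a\<in>V. w a)" by (simp add: sum_distrib_left)
  have subs: "L a \<subseteq> {1..n} \<and> R a \<subseteq> {1..n}" for a
    using P(1) unfolding L_def R_def Pa_def Pairs_def by auto
  have vi: "viol f x y" if xL: "x \<in> L a" and yR: "y \<in> R a" for a x y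
  proof -
    obtain p where p: "p \<in> P" "f (fst p) = a" "fst p \<le> \<theta> a" "x = fst p" using xL unfolding L_def Pa_def by auto
    obtain q where q: "q \<in> P" "f (fst q) = a" "\<theta> a \<le> fst q" "y = snd q" using yR unfolding R_def Pa_def by auto
    have "viol f (fst q) (snd q)" using q(1) P(1) unfolding Pairs_def by auto
    then show ?thesis using p q unfolding viol_def by auto
  qed
  have dis: "L a \<inter> L b = {} \<and> R a \<inter> R b = {}" if "a \<noteq> b" for a b
  proof
    show "L a \<inter> L b = {}" using that unfolding L_def Pa_def by auto
    show "R a \<inter> R b = {}"
    proof (rule ccontr)
      assume "R a \<inter> R b \<noteq> {}"
      then obtain p q where "p \<in> Pa a" "q \<in> Pa b" "snd p = snd q" unfolding R_def by auto
      moreover then have "p \<noteq> q" using that unfolding Pa_def by auto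
      ultimately show False using P(2) PaP unfolding disjP_def by blast
    qed
  qed
  show ?thesis
    apply (rule exI[of _ L], rule exI[of _ R], rule exI[of _ w])
    using subs vi dis eP cP unfolding V_def by (auto simp: w_def)
qed



definition detect :: "(nat \<Rightarrow> real) \<Rightarrow> nat list \<Rightarrow> bool" where
  "detect f q \<longleftrightarrow> (\<exists>x\<in>set q. \<exists>y\<in>set q. viol f x y)"

definition decide :: "nat list \<Rightarrow> real option list \<Rightarrow> bool" where
  "decide qs ans \<longleftrightarrow> \<not>(\<exists>i<length qs. \<exists>j<length qs. \<exists>u v. ans!i = Some u \<and> ans!j = Some v \<and> qs!i < qs!j \<and> v < u)"

lemma prob_EU: "n \<ge> 1 \<Longrightarrow> measure_pmf.prob (uniform_queries n k) {q. P q} = EU n k (\<lambda>q. if P q then 1 else 0)"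
proof -
  assume n: "n \<ge> 1"
  have "measure_pmf.prob (uniform_queries n k) {q. P q} = measure_pmf.expectation (uniform_queries n k) (indicator {q. P q})"
    by simp
  also have "indicator {q. P q} = (\<lambda>q. if P q then 1 else (0::real))" by (auto simp: fun_eq_iff)
  finally show ?thesis using exp_EU[OF n] by simp
qed

lemma accept_EU: "n \<ge> 1 \<Longrightarrow> accept_prob n k (\<lambda>qs ans. return_pmf (decide qs ans)) f adv
   = EU n k (\<lambda>q. if decide q (oracle_answers f adv q) then 1 else 0)"
proof -
  assume n: "n \<ge> 1"
  have "bind_pmf (uniform_queries n k) (\<lambda>qs. return_pmf (decide qs (oracle_answers f adv qs)))
      = map_pmf (\<lambda>qs. decide qs (oracle_answers f adv qs)) (uniform_queries n k)"
    by (simp add: map_pmf_def)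
  then have "accept_prob n k (\<lambda>qs ans. return_pmf (decide qs ans)) f adv
     = measure_pmf.prob (uniform_queries n k) {q. decide q (oracle_answers f adv q)}"
    unfolding accept_prob_def by (simp add: vimage_def)
  then show ?thesis using prob_EU[OF n] by simp
qed

lemma oa_length: "length (oracle_answers f adv qs) = length qs"
  by (simp add: oracle_answers_def)

lemma oa_nth: "i < length qs \<Longrightarrow> oracle_answers f adv qs ! i = (if qs!i \<in> erased_before adv qs i then None else Some (f (qs!i)))"
  by (simp add: oracle_answers_def)

lemma sorted_decide: "sorted_seq n f \<Longrightarrow> set q \<subseteq> {1..n} \<Longrightarrow> decide q (oracle_answers f adv q)"
  unfolding decide_def sorted_seq_def
proof (clarify)
  fix i j u v
  assume s: "\<forall>x\<in>{1..n}. \<forall>y\<in>{1..n}. x < y \<longrightarrow> f x \<le> f y" and q: "set q \<subseteq> {1..n}"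
    and ij: "i < length q" "j < length q" and u: "oracle_answers f adv q ! i = Some u"
    and v: "oracle_answers f adv q ! j = Some v" and lt: "q ! i < q ! j" and vu: "v < u"
  have "u = f (q!i)" using u oa_nth[OF ij(1)] by (auto split: if_splits)
  moreover have "v = f (q!j)" using v oa_nth[OF ij(2)] by (auto split: if_splits)
  moreover have "q!i \<in> {1..n}" "q!j \<in> {1..n}" using q ij nth_mem by blast+
  ultimately show False using s lt vu by force
qed

lemma far_decide: "decide q (oracle_answers f adv q) \<Longrightarrow> erasedE adv [] q \<or> \<not> detect f q"
proof (rule ccontr)
  assume d: "decide q (oracle_answers f adv q)" and c: "\<not> (erasedE adv [] q \<or> \<not> detect f q)"
  then obtain x y where xy: "x \<in> set q" "y \<in> set q" "viol f x y" unfolding detect_def by auto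
  obtain i where i: "i < length q" "q!i = x" using xy(1) by (auto simp: in_set_conv_nth)
  obtain j where j: "j < length q" "q!j = y" using xy(2) by (auto simp: in_set_conv_nth)
  have ne: "\<forall>i<length q. q!i \<notin> erased_before adv q i" using c unfolding erasedE_def by simp
  have "oracle_answers f adv q ! i = Some (f x)" using oa_nth[OF i(1)] ne i by auto
  moreover have "oracle_answers f adv q ! j = Some (f y)" using oa_nth[OF j(1)] ne j by auto
  ultimately show False using d i j xy(3) unfolding decide_def viol_def by blast
qed

lemma nodetect_bound:
  assumes n: "n \<ge> 1" and far: "far_from_sorted n \<epsilon> f" and cr: "card (f ` {1..n}) \<le> r"
    and eps: "0 < \<epsilon>" and s: "real s \<ge> 48 * sqrt (real r) / \<epsilon>"
  shows "EU n (s + s) (\<lambda>q. if \<not> detect f q then 1 else 0) \<le> 1/5"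
proof -
  define V where "V = f ` {1..n}"
  obtain L R w where sub: "\<forall>a\<in>V. L a \<subseteq> {1..n} \<and> R a \<subseteq> {1..n} \<and> 0 \<le> w a \<and> w a \<le> real (card (L a)) \<and> w a \<le> real (card (R a))"
     and dis: "\<forall>a\<in>V. \<forall>b\<in>V. a \<noteq> b \<longrightarrow> L a \<inter> L b = {} \<and> R a \<inter> R b = {}"
     and vi: "\<forall>a\<in>V. \<forall>x\<in>L a. \<forall>y\<in>R a. viol f x y"
     and ew: "\<epsilon> * real n \<le> 4 * (\<Sum>a\<in>V. w a)"
    using classes[OF n far] unfolding V_def by blast
  have finV: "finite V" unfolding V_def by simp
  have np: "real n > 0" using n by simp
  have V1: "card V \<ge> 1" using n finV unfolding V_def by (simp add: Suc_le_eq card_gt_0_iff)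
  have r1: "real r \<ge> 1" using V1 cr unfolding V_def by linarith
  define H where "H q1 = {a\<in>V. set q1 \<inter> L a \<noteq> {}}" for q1
  define B where "B q1 = (\<Union>a\<in>H q1. R a)" for q1
  have BS: "B q1 \<subseteq> {1..n}" for q1 using sub unfolding B_def H_def by auto
  have finR: "finite (R a)" if "a \<in> V" for a using sub that finite_subset[OF _ finite_atLeastAtMost] by blast
  have cardB: "real (card (B q1)) = (\<Sum>a\<in>H q1. real (card (R a)))" for q1
  proof -
    have "card (B q1) = (\<Sum>a\<in>H q1. card (R a))" unfolding B_def
      by (rule card_UN_disjoint) (use finV finR dis in \<open>auto simp: H_def\<close>)
    then show ?thesis by simp
  qed
  have sumH: "(\<Sum>a\<in>V. w a * Ind (L a) q1) \<le> real (card (B q1))" for q1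
  proof -
    have "(\<Sum>a\<in>V. w a * Ind (L a) q1) = (\<Sum>a\<in>H q1. w a)"
      unfolding H_def using finV by (simp add: sum.inter_filter Ind_def if_distrib cong: if_cong) (rule sum.cong, auto)
    also have "\<dots> \<le> (\<Sum>a\<in>H q1. real (card (R a)))" by (rule sum_mono) (use sub in \<open>auto simp: H_def\<close>)
    finally show ?thesis using cardB by simp
  qed
  have cBn: "real (card (B q1)) \<le> real n" for q1 using card_mono[OF _ BS[of q1]] by simp
  let ?c = "real s / real n"
  have "EU n (s + s) (\<lambda>q. if \<not> detect f q then 1 else 0)
      = EU n s (\<lambda>q1. EU n s (\<lambda>q2. if \<not> detect f (q1 @ q2) then 1 else 0))" by (rule EU_append)
  also have "\<dots> \<le> EU n s (\<lambda>q1. EU n s (\<lambda>q2. if set q2 \<inter> B q1 = {} then 1 else 0))"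
  proof (intro EU_mono[OF n])
    fix q1 q2 :: "nat list"
    have "\<not> detect f (q1 @ q2) \<Longrightarrow> set q2 \<inter> B q1 = {}"
    proof (rule ccontr)
      assume nd: "\<not> detect f (q1 @ q2)" and ne: "set q2 \<inter> B q1 \<noteq> {}"
      then obtain y a where y: "y \<in> set q2" "a \<in> H q1" "y \<in> R a" unfolding B_def by auto
      then obtain x where x: "x \<in> set q1" "x \<in> L a" "a \<in> V" unfolding H_def by auto
      have "viol f x y" using vi x y by blast
      then show False using nd x y unfolding detect_def by auto
    qed
    then show "(if \<not> detect f (q1 @ q2) then 1 else 0) \<le> (if set q2 \<inter> B q1 = {} then 1 else (0::real))" by auto
  qed
  also have "\<dots> = EU n s (\<lambda>q1. (1 - real (card (B q1)) / real n) ^ s)"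
    using EU_miss[OF n BS] by simp
  also have "\<dots> \<le> EU n s (\<lambda>q1. 1 / (1 + ?c * (\<Sum>a\<in>V. w a * Ind (L a) q1)))"
  proof (rule EU_mono[OF n])
    fix q1 :: "nat list"
    have z: "0 \<le> real (card (B q1)) / real n" "real (card (B q1)) / real n \<le> 1" using cBn[of q1] np by auto
    have "(1 - real (card (B q1)) / real n) ^ s \<le> 1 / (1 + real s * (real (card (B q1)) / real n))"
      by (rule pow_le_inv[OF z])
    also have "\<dots> \<le> 1 / (1 + ?c * (\<Sum>a\<in>V. w a * Ind (L a) q1))"
    proof -
      have s0: "0 \<le> (\<Sum>a\<in>V. w a * Ind (L a) q1)" using sub by (auto intro!: sum_nonneg simp: Ind_def)
      have "?c * (\<Sum>a\<in>V. w a * Ind (L a) q1) \<le> real s * (real (card (B q1)) / real n)"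
        using mult_left_mono[OF sumH[of q1], of ?c] by (simp add: field_simps)
      moreover have "0 \<le> ?c * (\<Sum>a\<in>V. w a * Ind (L a) q1)" using s0 by simp
      ultimately show ?thesis by (intro divide_left_mono) (auto simp: add_pos_nonneg)
    qed
    finally show "(1 - real (card (B q1)) / real n) ^ s \<le> 1 / (1 + ?c * (\<Sum>a\<in>V. w a * Ind (L a) q1))" .
  qed
  also have "\<dots> \<le> 2 / (1 + ?c * (\<Sum>a\<in>V. w a * (1 - (1 - real (card (L a))/real n)^s)))"
    by (rule core[OF n finV]) (use sub dis in auto)
  also have "\<dots> \<le> 1/5"
  proof -
    define \<mu> where "\<mu> = ?c * (\<Sum>a\<in>V. w a * (1 - (1 - real (card (L a))/real n)^s))"
    define x where "x a = real s * w a / real n" for a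
    define T where "T = (\<Sum>a\<in>V. x a * (x a / (1 + x a)))"
    define X where "X = (\<Sum>a\<in>V. x a)"
    have Tm: "T \<le> \<mu>" unfolding T_def \<mu>_def x_def by (rule mu_lower[OF n]) (use sub in auto)
    have x0: "\<forall>a\<in>V. 0 \<le> x a" using sub unfolding x_def by auto
    have cs: "X^2 \<le> T * (real (card V) + X)" unfolding X_def T_def by (rule cs_bound[OF finV x0])
    have X0: "X \<ge> 0" unfolding X_def using x0 by (simp add: sum_nonneg)
    have XX: "X = ?c * (\<Sum>a\<in>V. w a)" unfolding X_def x_def by (simp add: sum_distrib_left)
    have "X \<ge> 12 * sqrt (real r)"
    proof -
      have "?c * (\<epsilon> * real n) \<le> ?c * (4 * (\<Sum>a\<in>V. w a))" by (rule mult_left_mono[OF ew]) simp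
      moreover have "?c * (\<epsilon> * real n) = real s * \<epsilon>" using np by simp
      moreover have "?c * (4 * (\<Sum>a\<in>V. w a)) = 4 * X" using XX by simp
      ultimately have "real s * \<epsilon> \<le> 4 * X" by linarith
      moreover have "48 * sqrt (real r) \<le> real s * \<epsilon>" using s eps by (simp add: field_simps)
      ultimately show ?thesis by linarith
    qed
    then have "9 * (real (card V) + X) \<le> X^2"
      by (rule final_arith[OF r1]) (use cr in \<open>auto simp: V_def\<close>)
    then have "9 * (real (card V) + X) \<le> T * (real (card V) + X)" using cs by linarith
    moreover have "real (card V) + X > 0" using V1 X0 by simp
    ultimately have "9 \<le> T" by (metis mult_right_le_imp_le)
    then have "9 \<le> \<mu>" using Tm by simp
    then show ?thesis unfolding \<mu>_def[symmetric] by (simp add: field_simps)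
  qed
  finally show ?thesis .
qed



theorem theorem1p6:
  shows "\<exists>c0::real>0. \<exists>C::real>0. \<forall>n r t::nat. \<forall>\<epsilon>::real.
     0 < \<epsilon> \<and> \<epsilon> < 1 \<and> real r * c0 * real t < \<epsilon>^2 * real n \<longrightarrow>
     (\<exists>k dec. real k \<le> C * sqrt (real r) / \<epsilon> \<and> oe_sortedness_tester n r t \<epsilon> k dec)"
proof (rule exI[of _ "115248::real"], rule conjI, simp, rule exI[of _ "98::real"], rule conjI, simp, intro allI impI)
  fix n r t :: nat and \<epsilon> :: real
  assume h: "0 < \<epsilon> \<and> \<epsilon> < 1 \<and> real r * 115248 * real t < \<epsilon>^2 * real n"
  have eps: "0 < \<epsilon>" "\<epsilon> < 1" using h by auto
  have "0 < \<epsilon>^2 * real n" using h by (smt (verit) mult_nonneg_nonneg of_nat_0_le_iff)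
  then have n: "n \<ge> 1" using eps by (simp add: zero_less_mult_iff)
  define s where "s = nat \<lceil>48 * sqrt (real r) / \<epsilon>\<rceil>"
  define k where "k = s + s"
  have sge: "real s \<ge> 48 * sqrt (real r) / \<epsilon>" unfolding s_def by linarith
  have kb: "real k \<le> 98 * sqrt (real r) / \<epsilon>"
  proof (cases "r = 0")
    case True then show ?thesis by (simp add: k_def s_def)
  next
    case False
    then have sq: "sqrt (real r) \<ge> 1" by simp
    then have "\<epsilon> \<le> sqrt (real r)" using eps by linarith
    then have one: "1 \<le> sqrt (real r) / \<epsilon>" using eps by (simp add: le_divide_eq)
    have "real s \<le> 48 * sqrt (real r) / \<epsilon> + 1" unfolding s_def
      using eps by (simp add: of_nat_nat)
    then show ?thesis unfolding k_def using one by simp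
  qed
  show "\<exists>k dec. real k \<le> 98 * sqrt (real r) / \<epsilon> \<and> oe_sortedness_tester n r t \<epsilon> k dec"
  proof -
    have "oe_sortedness_tester n r t \<epsilon> k (\<lambda>qs ans. return_pmf (decide qs ans))"
      unfolding oe_sortedness_tester_def
    proof (intro allI impI conjI)
      fix f :: "nat \<Rightarrow> real" and adv :: adversary assume cr: "card (f ` {1..n}) \<le> r" and v: "valid_adversary t adv"
      {
        assume so: "sorted_seq n f"
        have "EU n k (\<lambda>q. if decide q (oracle_answers f adv q) then 1 else 0) \<le> EU n k (\<lambda>_. 1)"
          by (rule EU_mono[OF n]) simp
        moreover have "EU n k (\<lambda>_. 1) \<le> EU n k (\<lambda>q. if decide q (oracle_answers f adv q) then 1 else 0)"
          by (rule EU_mono[OF n]) (simp add: sorted_decide[OF so])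
        ultimately show "accept_prob n k (\<lambda>qs ans. return_pmf (decide qs ans)) f adv = 1"
          using accept_EU[OF n] EU_const[OF n] by (metis antisym)
      }
      {
        assume far: "far_from_sorted n \<epsilon> f"
        have "EU n k (\<lambda>q. if decide q (oracle_answers f adv q) then 1 else 0)
           \<le> EU n k (\<lambda>q. (if erasedE adv [] q then 1 else 0) + (if \<not> detect f q then 1 else 0))"
          by (rule EU_mono[OF n]) (use far_decide in force)
        also have "\<dots> = EU n k (\<lambda>q. if erasedE adv [] q then 1 else 0) + EU n k (\<lambda>q. if \<not> detect f q then 1 else 0)"
          by (rule EU_add)
        also have "\<dots> \<le> (\<Sum>i<k. real ((length ([]::nat list) + i) * t)) / real n + 1/5"
          using EU_erased[OF v n, of k "[]"] nodetect_bound[OF n far cr eps(1) sge] unfolding k_def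
          by linarith
        also have "(\<Sum>i<k. real ((length ([]::nat list) + i) * t)) / real n \<le> 1/12"
        proof -
          have "(\<Sum>i<k. real ((length ([]::nat list) + i) * t)) \<le> (\<Sum>i<k. real k * real t)"
            by (rule sum_mono) (simp add: mult_right_mono)
          also have "\<dots> = real k ^ 2 * real t" by (simp add: power2_eq_square)
          also have "\<dots> \<le> (98 * sqrt (real r) / \<epsilon>) ^ 2 * real t"
            by (rule mult_right_mono[OF power_mono[OF kb]]) auto
          also have "\<dots> = 9604 * real r * real t / \<epsilon>^2" by (simp add: power_divide power_mult_distrib)
          also have "\<dots> \<le> real n / 12"
          proof -
            have "9604 * real r * real t * 12 \<le> \<epsilon>^2 * real n" using h by simp
            then show ?thesis using eps by (simp add: field_simps)
          qed
          finally show ?thesis using n by (simp add: field_simps)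
        qed
        finally have "accept_prob n k (\<lambda>qs ans. return_pmf (decide qs ans)) f adv \<le> 1/12 + 1/5"
          using accept_EU[OF n] by simp
        then show "2/3 \<le> 1 - accept_prob n k (\<lambda>qs ans. return_pmf (decide qs ans)) f adv" by simp
      }
    qed
    then show ?thesis using kb by blast
  qed
qed


end
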